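(* Let $N\ge2$ and let $(b,d)\in\mathbb{Z}^2$ be primitive with $N\nmid d$. Then there exists a sequence $v_0,\dots,v_k\in\mathbb{Z}^2$, $v_i=(b_i,d_i)$, with $v_0=(0,1)$, $v_k=(b,d)$, $b_{i}d_{i+1}-b_{i+1}d_{i}=1$ for $0\le i<k$, and $N\nmid d_i$ for all $0\le i\le k$. *)

theory Defs
  imports Main
begin

end

theory Submission
  imports Defs
begin

inductive RR :: "int \<Rightarrow> int \<Rightarrow> int \<Rightarrow> bool" for N where
  base: "RR N 0 1"
| step: "RR N a c \<Longrightarrow> a * d - b * c = 1 \<Longrightarrow> \<not> N dvd d \<Longrightarrow> RR N b d"

lemma RR_seq:
  assumes "RR N b d" "\<not> N dvd 1"
  shows "\<exists>(k::nat) (bs::nat \<Rightarrow> int) (ds::nat \<Rightarrow> int).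
           bs 0 = 0 \<and> ds 0 = 1 \<and> bs k = b \<and> ds k = d \<and>
           (\<forall>i<k. bs i * ds (Suc i) - bs (Suc i) * ds i = 1) \<and>
           (\<forall>i\<le>k. \<not> N dvd ds i)"
  using assms(1)
proof (induction rule: RR.induct)
  case base
  show ?case using assms(2) by (rule_tac x=0 in exI, rule_tac x="\<lambda>_. 0" in exI, rule_tac x="\<lambda>_. 1" in exI) auto
next
  case (step a c d b)
  then obtain k bs ds where H: "bs 0 = 0" "ds 0 = 1" "bs k = a" "ds k = c"
    "\<forall>i<k. bs i * ds (Suc i) - bs (Suc i) * ds i = 1" "\<forall>i\<le>k. \<not> N dvd ds i" by blast
  show ?case
  proof (rule exI[of _ "Suc k"], rule exI[of _ "bs(Suc k := b)"], rule exI[of _ "ds(Suc k := d)"], intro conjI allI impI)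
    fix i assume "i < Suc k"
    then consider "i < k" | "i = k" by linarith
    then show "(bs(Suc k := b)) i * (ds(Suc k := d)) (Suc i) - (bs(Suc k := b)) (Suc i) * (ds(Suc k := d)) i = 1"
      using H step by cases auto
  next
    fix i assume "i \<le> Suc k"
    then consider "i \<le> k" | "i = Suc k" by linarith
    then show "\<not> N dvd (ds(Suc k := d)) i" using H step by cases auto
  qed (use H in auto)
qed

lemma RR_neg:
  assumes "RR N b d" "\<not> N dvd 1"
  shows "RR N (-b) (-d)"
  using assms(1)
proof (induction rule: RR.induct)
  case base
  have "RR N (-1) 1" by (rule RR.step[OF RR.base]) (use assms(2) in auto)
  then show ?case by (rule RR.step) (use assms(2) in auto)
next
  case (step a c d b)
  show ?case by (rule RR.step[OF step(4)]) (use step in auto)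
qed

lemma RR_one:
  assumes "\<not> N dvd 1"
  shows "RR N b 1"
proof (induction b rule: int_induct[where k=0])
  case base
  then show ?case by (rule RR.base)
next
  case (step1 i)
  have "RR N (-i) (-1)" using RR_neg[OF step1(2) assms] by simp
  then show ?case by (rule RR.step) (use assms in auto)
next
  case (step2 i)
  show ?case by (rule RR.step[OF step2(2)]) (use assms in auto)
qed

lemma det_gcd:
  fixes a b c d :: int
  assumes "a * d - b * c = 1"
  shows "gcd a c = 1"
proof -
  have "gcd a c dvd a * d - b * c" by (simp add: dvd_diff)
  then have "gcd a c dvd 1" using assms by simp
  then show ?thesis by simp
qed

lemma RR_all:
  assumes "N \<ge> 2"
  shows "gcd b d = 1 \<Longrightarrow> \<not> N dvd d \<Longrightarrow> RR N b d"
proof (induction "nat \<bar>d\<bar>" arbitrary: b d rule: less_induct)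
  case less
  have N1: "\<not> N dvd 1" using assms zdvd_imp_le by fastforce
  have "d \<noteq> 0" using less by auto
  then consider "d = 1" | "d = -1" | "\<bar>d\<bar> \<ge> 2" by linarith
  then show ?case
  proof cases
    case 1 then show ?thesis using RR_one[OF N1] by simp
  next
    case 2 then show ?thesis using RR_neg[OF RR_one[OF N1, of "-b"] N1] by simp
  next
    case 3
    obtain u v where uv: "u * b + v * d = 1" using bezout_int[of b d] less(2) by auto
    define wb where "wb = v"
    define wd where "wd = -u"
    have det: "wb * d - b * wd = 1" using uv unfolding wb_def wd_def by (simp add: algebra_simps)
    define q where "q = wd div d"
    define r where "r = wd mod d"
    have wdr: "wd = q * d + r" unfolding q_def r_def by simp
    have r0: "r \<noteq> 0"
    proof
      assume "r = 0"
      then have "d dvd wb * d - b * wd" using wdr by simp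
      then have "d dvd 1" using det by simp
      then show False using 3 by (simp add: zdvd1_eq) 
    qed
    have rb: "\<bar>r\<bar> < \<bar>d\<bar>" "\<bar>r - d\<bar> < \<bar>d\<bar>"
    proof -
      have "(d > 0 \<and> 0 \<le> r \<and> r < d) \<or> (d < 0 \<and> d < r \<and> r \<le> 0)"
        unfolding r_def using \<open>d \<noteq> 0\<close>
        by (metis linorder_neqE_linordered_idom neg_mod_bound neg_mod_sign pos_mod_bound pos_mod_sign)
      then show "\<bar>r\<bar> < \<bar>d\<bar>" "\<bar>r - d\<bar> < \<bar>d\<bar>" using r0 by auto
    qed
    have "\<not> N dvd r \<or> \<not> N dvd (r - d)"
    proof (rule ccontr)
      assume "\<not> ?thesis"
      then have "N dvd r - (r - d)" using dvd_diff by blast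
      then show False using less(3) by simp
    qed
    then show ?thesis
    proof
      assume h: "\<not> N dvd r"
      have d1: "(wb - q * b) * d - b * r = 1" using det wdr by (simp add: algebra_simps)
      have "RR N (wb - q * b) r"
        using less(1)[of r "wb - q * b"] rb h det_gcd[OF d1] by simp
      then show ?thesis using d1 less(3) by (rule RR.step)
    next
      assume h: "\<not> N dvd (r - d)"
      have d1: "(wb - (q + 1) * b) * d - b * (r - d) = 1" using det wdr by (simp add: algebra_simps)
      have "RR N (wb - (q+1) * b) (r - d)"
        using less(1)[of "r - d" "wb - (q+1) * b"] rb h det_gcd[OF d1] by simp
      then show ?thesis using d1 less(3) by (rule RR.step)
    qed
  qed
qed

theorem mainTheorem8:
  fixes N :: int and b d :: int
  assumes "N \<ge> 2"
    and "gcd b d = 1"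
    and "\<not> N dvd d"
  shows "\<exists>(k::nat) (bs::nat \<Rightarrow> int) (ds::nat \<Rightarrow> int).
           bs 0 = 0 \<and> ds 0 = 1 \<and> bs k = b \<and> ds k = d \<and>
           (\<forall>i<k. bs i * ds (Suc i) - bs (Suc i) * ds i = 1) \<and>
           (\<forall>i\<le>k. \<not> N dvd ds i)"
proof -
  have N1: "\<not> N dvd 1" using assms(1) zdvd_imp_le by fastforce
  show ?thesis using RR_seq[OF RR_all[OF assms] N1] .
qed

end
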